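(* Let $G$ be a connected nontrivial graph with $m$ vertices and let $n\geq4$. If $\min\{n^2\lambda(G),\ (n-1)(m+2e(G))\}\geq 2n\delta(G)+2n-4$, then $G\boxtimes K_n$ is maximally restricted edge-connected, i.e. $\lambda'(G\boxtimes K_n)=\xi(G\boxtimes K_n)$.
   Context: All graphs are finite, simple and undirected; "nontrivial" means having at least two vertices. $K_n$ denotes the complete graph on $n$ vertices. For a graph $G$: $e(G)=|E(G)|$; $\delta(G)$ is the minimum degree; $\lambda(G)$ is the edge-connectivity; for an edge $uv$, its edge-degree is $d_G(u)+d_G(v)-2$, and $\xi(G)$ is the minimum edge-degree over all edges. A restricted edge-cut of a connected graph $G$ is a set $S\subseteq E(G)$ such that $G-S$ is disconnected and every component of $G-S$ has at least $2$ vertices; $\lambda'(G)$ is the minimum cardinality of a restricted edge-cut. A graph $G$ is maximally restricted edge-connected if $\lambda'(G)=\xi(G)$. The strong product $G\boxtimes H$ has vertex set $V(G)\times V(H)$, with $(x_1,y_1)$ and $(x_2,y_2)$ adjacent iff either $x_1=x_2$ and $y_1y_2\in E(H)$, or $y_1=y_2$ and $x_1x_2\in E(G)$, or $x_1x_2\in E(G)$ and $y_1y_2\in E(H)$. (One has $\xi(G\boxtimes K_n)=2n\delta(G)+2n-4$.) *)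

theory Defs
  imports Main
begin

definition graph :: "'a set \<Rightarrow> 'a set set \<Rightarrow> bool" where
  "graph V E \<longleftrightarrow> finite V \<and> (\<forall>e\<in>E. \<exists>u v. u \<noteq> v \<and> u \<in> V \<and> v \<in> V \<and> e = {u, v})"

definition adj :: "'a set set \<Rightarrow> 'a \<Rightarrow> 'a \<Rightarrow> bool" where
  "adj E u v \<longleftrightarrow> {u, v} \<in> E"

definition reachable :: "'a set \<Rightarrow> 'a set set \<Rightarrow> 'a \<Rightarrow> 'a \<Rightarrow> bool" where
  "reachable V E u v \<longleftrightarrow> u \<in> V \<and> v \<in> V \<and> (\<lambda>x y. x \<in> V \<and> y \<in> V \<and> adj E x y)\<^sup>*\<^sup>* u v"

definition connected_graph :: "'a set \<Rightarrow> 'a set set \<Rightarrow> bool" where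
  "connected_graph V E \<longleftrightarrow> V \<noteq> {} \<and> (\<forall>u\<in>V. \<forall>v\<in>V. reachable V E u v)"

definition component :: "'a set \<Rightarrow> 'a set set \<Rightarrow> 'a \<Rightarrow> 'a set" where
  "component V E v = {w. reachable V E v w}"

definition degree :: "'a set set \<Rightarrow> 'a \<Rightarrow> nat" where
  "degree E v = card {e \<in> E. v \<in> e}"

definition min_degree :: "'a set \<Rightarrow> 'a set set \<Rightarrow> nat" where
  "min_degree V E = Min (degree E ` V)"

definition min_edge_degree :: "'a set set \<Rightarrow> nat" where
  "min_edge_degree E = Min {degree E u + degree E v - 2 | u v. {u, v} \<in> E \<and> u \<noteq> v}"

definition edge_cut :: "'a set \<Rightarrow> 'a set set \<Rightarrow> 'a set set \<Rightarrow> bool" where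
  "edge_cut V E S \<longleftrightarrow> S \<subseteq> E \<and> \<not> connected_graph V (E - S)"

definition edge_connectivity :: "'a set \<Rightarrow> 'a set set \<Rightarrow> nat" where
  "edge_connectivity V E = Min {card S | S. edge_cut V E S}"

definition restricted_edge_cut :: "'a set \<Rightarrow> 'a set set \<Rightarrow> 'a set set \<Rightarrow> bool" where
  "restricted_edge_cut V E S \<longleftrightarrow> S \<subseteq> E \<and> \<not> connected_graph V (E - S)
     \<and> (\<forall>v\<in>V. card (component V (E - S) v) \<ge> 2)"

definition restricted_edge_connectivity :: "'a set \<Rightarrow> 'a set set \<Rightarrow> nat" where
  "restricted_edge_connectivity V E = Min {card S | S. restricted_edge_cut V E S}"

definition max_restricted_edge_connected :: "'a set \<Rightarrow> 'a set set \<Rightarrow> bool" where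
  "max_restricted_edge_connected V E \<longleftrightarrow> (\<exists>S. restricted_edge_cut V E S)
     \<and> restricted_edge_connectivity V E = min_edge_degree E"

definition complete_edges :: "nat \<Rightarrow> nat set set" where
  "complete_edges n = {{i, j} | i j. i < n \<and> j < n \<and> i \<noteq> j}"

definition strong_product_edges ::
  "'a set \<Rightarrow> 'a set set \<Rightarrow> 'b set \<Rightarrow> 'b set set \<Rightarrow> ('a \<times> 'b) set set" where
  "strong_product_edges V1 E1 V2 E2 =
     {{(x1, y1), (x2, y2)} | x1 y1 x2 y2.
        x1 \<in> V1 \<and> x2 \<in> V1 \<and> y1 \<in> V2 \<and> y2 \<in> V2 \<and>
        ((x1 = x2 \<and> adj E2 y1 y2) \<or> (y1 = y2 \<and> adj E1 x1 x2) \<or> (adj E1 x1 x2 \<and> adj E2 y1 y2))}"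

end

theory Submission
  imports Defs
begin


definition nbr :: "'a set \<Rightarrow> 'a set set \<Rightarrow> 'a \<Rightarrow> 'a set" where
  "nbr V E x = {y\<in>V. {x,y}\<in>E}"

definition cost :: "'a set \<Rightarrow> 'a set set \<Rightarrow> nat \<Rightarrow> ('a \<Rightarrow> int) \<Rightarrow> int" where
  "cost V E n a = (\<Sum>x\<in>V. a x * (int n - a x) + (\<Sum>y\<in>nbr V E x. a x * (int n - a y)))"

lemma concave_term:
  fixes t n ax ay :: int
  assumes "0 \<le> t" "t \<le> n"
  shows True by simp

lemma concave_step:
  assumes "0 \<le> a z" "a z \<le> int n"
  shows "(int n - a z) * cost V E n (a(z:=0)) + a z * cost V E n (a(z:=int n))
         \<le> int n * cost V E n a"
proof -
  let ?t = "a z" and ?a0 = "a(z:=0)" and ?a1 = "a(z:=int n)"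
  have inner: "(int n - ?t) * (?a0 x * (int n - ?a0 y)) + ?t * (?a1 x * (int n - ?a1 y))
      \<le> int n * (a x * (int n - a y))" for x y
  proof (cases "x = z")
    case True
    show ?thesis
    proof (cases "y = z")
      case True
      with \<open>x = z\<close> show ?thesis using assms by (simp add: mult_nonneg_nonneg)
    next
      case False
      with \<open>x = z\<close> show ?thesis by (simp add: algebra_simps)
    qed
  next
    case False
    then show ?thesis by (cases "y = z") (simp_all add: algebra_simps)
  qed
  have outer: "(int n - ?t) * (?a0 x * (int n - ?a0 x) + (\<Sum>y\<in>nbr V E x. ?a0 x * (int n - ?a0 y)))
      + ?t * (?a1 x * (int n - ?a1 x) + (\<Sum>y\<in>nbr V E x. ?a1 x * (int n - ?a1 y)))
      \<le> int n * (a x * (int n - a x) + (\<Sum>y\<in>nbr V E x. a x * (int n - a y)))" for x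
  proof -
    have s: "(int n - ?t) * (\<Sum>y\<in>nbr V E x. ?a0 x * (int n - ?a0 y)) + ?t * (\<Sum>y\<in>nbr V E x. ?a1 x * (int n - ?a1 y))
      \<le> int n * (\<Sum>y\<in>nbr V E x. a x * (int n - a y))"
      unfolding sum_distrib_left sum.distrib[symmetric] by (rule sum_mono) (rule inner)
    have d: "(int n - ?t) * (?a0 x * (int n - ?a0 x)) + ?t * (?a1 x * (int n - ?a1 x))
      \<le> int n * (a x * (int n - a x))" by (rule inner)
    from s d show ?thesis by (simp add: distrib_left)
  qed
  show ?thesis
    unfolding cost_def sum_distrib_left sum.distrib[symmetric] by (rule sum_mono) (rule outer)
qed

lemma nbr_sym: "y \<in> nbr V E x \<Longrightarrow> x \<in> V \<Longrightarrow> x \<in> nbr V E y"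
  unfolding nbr_def by (auto simp: insert_commute)

lemma cost_compl:
  assumes "finite V"
  shows "cost V E n (\<lambda>x. int n - a x) = cost V E n a"
proof -
  have sw: "(\<Sum>x\<in>V. \<Sum>y\<in>nbr V E x. (int n - a x) * a y) = (\<Sum>x\<in>V. \<Sum>y\<in>nbr V E x. a x * (int n - a y))"
  proof -
    have "(\<Sum>x\<in>V. \<Sum>y\<in>nbr V E x. (int n - a x) * a y)
        = (\<Sum>x\<in>V. \<Sum>y\<in>{y. y\<in>V \<and> {x,y}\<in>E}. (int n - a x) * a y)"
      by (simp add: nbr_def)
    also have "\<dots> = (\<Sum>y\<in>V. \<Sum>x\<in>{x. x\<in>V \<and> {x,y}\<in>E}. (int n - a x) * a y)"
      by (rule sum.swap_restrict) (use assms in auto)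
    also have "\<dots> = (\<Sum>y\<in>V. \<Sum>x\<in>nbr V E y. a y * (int n - a x))"
      by (simp add: nbr_def insert_commute mult.commute)
    finally show ?thesis .
  qed
  have "cost V E n (\<lambda>x. int n - a x) = (\<Sum>x\<in>V. (int n - a x) * a x) + (\<Sum>x\<in>V. \<Sum>y\<in>nbr V E x. (int n - a x) * a y)"
    by (simp add: cost_def sum.distrib)
  also have "\<dots> = cost V E n a"
    by (simp only: cost_def sum.distrib sw) (simp add: mult.commute)
  finally show ?thesis .
qed

lemma cost_small:
  assumes fin: "finite V" and deg: "\<forall>x\<in>V. \<delta> \<le> card (nbr V E x)" and d1: "1 \<le> \<delta>"
    and rng: "\<forall>x\<in>V. 0 \<le> a x \<and> a x \<le> int n"
    and irr: "\<forall>x\<in>V. x \<notin> nbr V E x"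
    and k2: "2 \<le> sum a V" and kn: "sum a V \<le> int n"
  shows "2 * int n * int \<delta> + 2 * int n - 4 \<le> cost V E n a"
proof -
  define k where "k = sum a V"
  have g: "int n + int n * int \<delta> - k \<le> (int n - a x) + (\<Sum>y\<in>nbr V E x. int n - a y)" if x: "x \<in> V" for x
  proof -
    have fN: "finite (nbr V E x)" using fin by (simp add: nbr_def)
    have sub: "insert x (nbr V E x) \<subseteq> V" using x by (auto simp: nbr_def)
    have "a x + sum a (nbr V E x) = sum a (insert x (nbr V E x))"
      using irr x fN by simp
    also have "\<dots> \<le> k" unfolding k_def
      by (rule sum_mono2[OF fin sub]) (use rng in auto)
    finally have A: "a x + sum a (nbr V E x) \<le> k" .
    have B: "(\<Sum>y\<in>nbr V E x. int n - a y) = int n * int (card (nbr V E x)) - sum a (nbr V E x)"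
      by (simp add: sum_subtractf)
    have C: "int n * int \<delta> \<le> int n * int (card (nbr V E x))"
      using deg x by (intro mult_left_mono) auto
    show ?thesis using A B C by linarith
  qed
  have "(\<Sum>x\<in>V. a x * (int n + int n * int \<delta> - k)) \<le> cost V E n a"
    unfolding cost_def
  proof (rule sum_mono)
    fix x assume x: "x \<in> V"
    have "a x * (int n + int n * int \<delta> - k) \<le> a x * ((int n - a x) + (\<Sum>y\<in>nbr V E x. int n - a y))"
      using g[OF x] rng x by (intro mult_left_mono) auto
    then show "a x * (int n + int n * int \<delta> - k) \<le> a x * (int n - a x) + (\<Sum>y\<in>nbr V E x. a x * (int n - a y))"
      by (simp add: distrib_left sum_distrib_left)
  qed
  moreover have "(\<Sum>x\<in>V. a x * (int n + int n * int \<delta> - k)) = k * (int n + int n * int \<delta> - k)"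
    unfolding k_def by (simp add: sum_distrib_right)
  moreover have "2 * int n * int \<delta> + 2 * int n - 4 \<le> k * (int n + int n * int \<delta> - k)"
  proof -
    have "int n * 1 \<le> int n * int \<delta>" using d1 by (intro mult_left_mono) auto
    hence "0 \<le> (k - 2) * (int n + int n * int \<delta> - k - 2)"
      using k2 kn unfolding k_def by (intro mult_nonneg_nonneg) linarith+
    thus ?thesis by (simp add: algebra_simps)
  qed
  ultimately show ?thesis by linarith
qed


lemma cost_cut:
  assumes fin: "finite V" and bin: "\<forall>x\<in>V. a x = 0 \<or> a x = int n"
  shows "cost V E n a = int n * int n * (\<Sum>x\<in>{x\<in>V. a x = int n}. int (card {y\<in>nbr V E x. y \<notin> {x\<in>V. a x = int n}}))"
proof -
  let ?A = "{x\<in>V. a x = int n}"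
  have t: "a x * (int n - a x) + (\<Sum>y\<in>nbr V E x. a x * (int n - a y))
      = (if x \<in> ?A then int n * int n * int (card {y\<in>nbr V E x. y \<notin> ?A}) else 0)" if x: "x \<in> V" for x
  proof (cases "a x = int n")
    case True
    have fN: "finite (nbr V E x)" using fin by (simp add: nbr_def)
    have "(\<Sum>y\<in>nbr V E x. a x * (int n - a y)) = (\<Sum>y\<in>nbr V E x. if y \<notin> ?A then int n * int n else 0)"
    proof (rule sum.cong)
      fix y assume "y \<in> nbr V E x"
      hence "y \<in> V" by (simp add: nbr_def)
      thus "a x * (int n - a y) = (if y \<notin> ?A then int n * int n else 0)"
        using bin True by auto
    qed simp
    also have "\<dots> = int n * int n * int (card {y\<in>nbr V E x. y \<notin> ?A})"
      using fN by (simp add: sum.If_cases Int_def)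
    finally show ?thesis using True x by simp
  next
    case False
    then have "a x = 0" using bin x by auto
    then show ?thesis using False by simp
  qed
  have "cost V E n a = (\<Sum>x\<in>V. if x \<in> ?A then int n * int n * int (card {y\<in>nbr V E x. y \<notin> ?A}) else 0)"
    unfolding cost_def by (rule sum.cong) (simp_all add: t)
  also have "\<dots> = (\<Sum>x\<in>?A. int n * int n * int (card {y\<in>nbr V E x. y \<notin> ?A}))"
    using fin by (simp add: sum.If_cases Int_def)
  also have "\<dots> = int n * int n * (\<Sum>x\<in>?A. int (card {y\<in>nbr V E x. y \<notin> ?A}))"
    by (simp add: sum_distrib_left)
  finally show ?thesis .
qed

lemma sum_upd:
  assumes "finite V" "z \<in> V"
  shows "sum (a(z:=v)) V = sum a V - a z + (v::int)"
proof -
  have "sum (a(z:=v)) V = (a(z:=v)) z + sum (a(z:=v)) (V - {z})"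
    using assms by (simp add: sum.remove)
  also have "sum (a(z:=v)) (V - {z}) = sum a (V - {z})"
    by (rule sum.cong) auto
  also have "sum a V = a z + sum a (V - {z})" using assms by (simp add: sum.remove)
  ultimately show ?thesis by simp
qed

lemma cost_bound:
  fixes \<xi> :: int
  assumes fin: "finite V" and deg: "\<forall>x\<in>V. \<delta> \<le> card (nbr V E x)" and d1: "1 \<le> \<delta>"
    and irr: "\<forall>x\<in>V. x \<notin> nbr V E x" and n2: "2 \<le> n"
    and xi: "\<xi> = 2 * int n * int \<delta> + 2 * int n - 4"
    and cut: "\<And>A. A \<subseteq> V \<Longrightarrow> A \<noteq> {} \<Longrightarrow> A \<noteq> V \<Longrightarrow>
          \<xi> \<le> int n * int n * (\<Sum>x\<in>A. int (card {y\<in>nbr V E x. y \<notin> A}))"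
  shows "\<forall>x\<in>V. 0 \<le> a x \<and> a x \<le> int n \<Longrightarrow> 2 \<le> sum a V \<Longrightarrow> sum a V + 2 \<le> int n * int (card V)
     \<Longrightarrow> \<xi> \<le> cost V E n a"
proof (induction "card {x\<in>V. 0 < a x \<and> a x < int n}" arbitrary: a rule: less_induct)
  case less
  note rng = less.prems(1)
  show ?case
  proof (cases "sum a V \<le> int n")
    case True
    show ?thesis unfolding xi by (rule cost_small[OF fin deg d1 rng irr less.prems(2) True])
  next
    case big: False
    show ?thesis
    proof (cases "int n * int (card V) - int n \<le> sum a V")
      case True
      let ?b = "\<lambda>x. int n - a x"
      have sb: "sum ?b V = int n * int (card V) - sum a V"
        by (simp add: sum_subtractf)
      have "\<xi> \<le> cost V E n ?b" unfolding xi
        by (rule cost_small[OF fin deg d1 _ irr]) (use rng sb True less.prems(3) in auto)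
      thus ?thesis by (simp add: cost_compl[OF fin])
    next
      case mid: False
      show ?thesis
      proof (cases "\<exists>z\<in>V. 0 < a z \<and> a z < int n")
        case True
        then obtain z where z: "z \<in> V" "0 < a z" "a z < int n" by blast
        let ?a0 = "a(z:=0)" and ?a1 = "a(z:=int n)"
        have fP: "finite {x\<in>V. 0 < a x \<and> a x < int n}" using fin by simp
        have lt0: "card {x\<in>V. 0 < ?a0 x \<and> ?a0 x < int n} < card {x\<in>V. 0 < a x \<and> a x < int n}"
          by (rule psubset_card_mono[OF fP]) (use z in auto)
        have lt1: "card {x\<in>V. 0 < ?a1 x \<and> ?a1 x < int n} < card {x\<in>V. 0 < a x \<and> a x < int n}"
          by (rule psubset_card_mono[OF fP]) (use z in auto)
        have s0: "sum ?a0 V = sum a V - a z" using sum_upd[OF fin z(1)] by simp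
        have s1: "sum ?a1 V = sum a V - a z + int n" using sum_upd[OF fin z(1)] by simp
        have c0: "\<xi> \<le> cost V E n ?a0"
          by (rule less.hyps[OF lt0]) (use rng z s0 big less.prems(3) in auto)
        have c1: "\<xi> \<le> cost V E n ?a1"
          by (rule less.hyps[OF lt1]) (use rng z s1 mid less.prems(2) in auto)
        have "(int n - a z) * \<xi> + a z * \<xi> \<le> (int n - a z) * cost V E n ?a0 + a z * cost V E n ?a1"
          using z c0 c1 by (intro add_mono mult_left_mono) auto
        also have "\<dots> \<le> int n * cost V E n a"
          by (rule concave_step) (use z in auto)
        finally have "int n * \<xi> \<le> int n * cost V E n a" by (simp add: algebra_simps)
        thus ?thesis using n2 by simp
      next
        case False
        let ?A = "{x\<in>V. a x = int n}"
        have bin: "\<forall>x\<in>V. a x = 0 \<or> a x = int n" using False rng by force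
        have ne: "?A \<noteq> {}"
        proof
          assume "?A = {}"
          hence "\<forall>x\<in>V. a x = 0" using bin by auto
          hence "sum a V = 0" by simp
          thus False using less.prems(2) by simp
        qed
        have nV: "?A \<noteq> V"
        proof
          assume "?A = V"
          hence "\<forall>x\<in>V. a x = int n" by auto
          hence "sum a V = int n * int (card V)" by simp
          thus False using less.prems(3) by simp
        qed
        show ?thesis using cost_cut[OF fin bin] cut[OF _ ne nV] by auto
      qed
    qed
  qed
qed



lemma graph_edge:
  assumes "graph V E" "{x,y} \<in> E"
  shows "x \<noteq> y \<and> x \<in> V \<and> y \<in> V"
proof -
  from assms obtain u v where "u \<noteq> v" "u \<in> V" "v \<in> V" "{x,y} = {u,v}"
    unfolding graph_def by blast
  then show ?thesis by (auto simp: doubleton_eq_iff)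
qed

lemma graph_elem:
  assumes "graph V E" "e \<in> E"
  shows "\<exists>u v. u \<noteq> v \<and> u \<in> V \<and> v \<in> V \<and> e = {u,v}"
  using assms unfolding graph_def by blast

lemma graph_finE: "graph V E \<Longrightarrow> finite E"
proof -
  assume g: "graph V E"
  have "E \<subseteq> Pow V"
  proof
    fix e assume "e \<in> E"
    then obtain u v where "u \<in> V" "v \<in> V" "e = {u,v}" using g unfolding graph_def by blast
    then show "e \<in> Pow V" by auto
  qed
  moreover have "finite V" using g unfolding graph_def by blast
  ultimately show ?thesis using finite_subset by blast
qed

lemma degree_nbr:
  assumes g: "graph V E" and x: "x \<in> V"
  shows "degree E x = card (nbr V E x)"
proof -
  have "bij_betw (\<lambda>y. {x,y}) (nbr V E x) {e\<in>E. x \<in> e}"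
  proof (rule bij_betwI')
    fix y z assume "y \<in> nbr V E x" "z \<in> nbr V E x"
    then have "x \<noteq> y" using graph_edge[OF g] by (auto simp: nbr_def)
    then show "({x,y} = {x,z}) = (y = z)" by (auto simp: doubleton_eq_iff)
  next
    fix y assume "y \<in> nbr V E x" then show "{x,y} \<in> {e\<in>E. x \<in> e}" by (auto simp: nbr_def)
  next
    fix e assume e: "e \<in> {e\<in>E. x \<in> e}"
    then obtain u v where uv: "u \<noteq> v" "u \<in> V" "v \<in> V" "e = {u,v}"
      using g unfolding graph_def by blast
    show "\<exists>y\<in>nbr V E x. e = {x,y}"
    proof (cases "x = u")
      case True then show ?thesis using uv e by (auto simp: nbr_def)
    next
      case False then have "x = v" using uv e by auto
      then show ?thesis using uv e by (auto simp: nbr_def insert_commute)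
    qed
  qed
  then show ?thesis unfolding degree_def by (simp add: bij_betw_same_card)
qed

lemma adj_complete: "{i,j} \<in> complete_edges n \<longleftrightarrow> i < n \<and> j < n \<and> i \<noteq> j"
  unfolding complete_edges_def by (auto simp: doubleton_eq_iff)

lemma EH_def2: "e \<in> strong_product_edges V E W F \<longleftrightarrow> (\<exists>x1 y1 x2 y2. e = {(x1,y1),(x2,y2)} \<and>
        x1 \<in> V \<and> x2 \<in> V \<and> y1 \<in> W \<and> y2 \<in> W \<and>
        ((x1 = x2 \<and> adj F y1 y2) \<or> (y1 = y2 \<and> adj E x1 x2) \<or> (adj E x1 x2 \<and> adj F y1 y2)))"
  unfolding strong_product_edges_def by (rule mem_Collect_eq)

lemma EH_mem:
  assumes g: "graph V E" and x: "x \<in> V" "x' \<in> V" and ij: "i < n" "j < n"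
  shows "{(x,i),(x',j)} \<in> strong_product_edges V E {0..<n} (complete_edges n)
     \<longleftrightarrow> (x = x' \<and> i \<noteq> j) \<or> {x,x'} \<in> E"
proof
  assume "{(x,i),(x',j)} \<in> strong_product_edges V E {0..<n} (complete_edges n)"
  then obtain x1 y1 x2 y2 where eq: "{(x,i),(x',j)} = {(x1,y1),(x2,y2)}"
    and c: "(x1 = x2 \<and> adj (complete_edges n) y1 y2) \<or> (y1 = y2 \<and> adj E x1 x2) \<or> (adj E x1 x2 \<and> adj (complete_edges n) y1 y2)"
    unfolding EH_def2 by blast
  from c have c': "(x1 = x2 \<and> y1 \<noteq> y2) \<or> {x1,x2} \<in> E"
    unfolding adj_def adj_complete by blast
  from eq have "((x,i) = (x1,y1) \<and> (x',j) = (x2,y2)) \<or> ((x,i) = (x2,y2) \<and> (x',j) = (x1,y1))"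
    by (simp add: doubleton_eq_iff)
  then show "(x = x' \<and> i \<noteq> j) \<or> {x,x'} \<in> E"
  proof
    assume "(x,i) = (x1,y1) \<and> (x',j) = (x2,y2)"
    then show ?thesis using c' by simp
  next
    assume "(x,i) = (x2,y2) \<and> (x',j) = (x1,y1)"
    then show ?thesis using c' by (auto simp: insert_commute)
  qed
next
  assume h: "(x = x' \<and> i \<noteq> j) \<or> {x,x'} \<in> E"
  have "(x = x' \<and> adj (complete_edges n) i j) \<or> (i = j \<and> adj E x x') \<or> (adj E x x' \<and> adj (complete_edges n) i j)"
    using h ij unfolding adj_def adj_complete by blast
  then show "{(x,i),(x',j)} \<in> strong_product_edges V E {0..<n} (complete_edges n)"
    unfolding EH_def2 using x ij by (intro exI[of _ x] exI[of _ i] exI[of _ x'] exI[of _ j]) simp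
qed

lemma EH_elem:
  assumes g: "graph V E" and e: "e \<in> strong_product_edges V E {0..<n} (complete_edges n)"
  shows "\<exists>x i x' j. e = {(x,i),(x',j)} \<and> x \<in> V \<and> x' \<in> V \<and> i < n \<and> j < n \<and> (x,i) \<noteq> (x',j)
     \<and> ((x = x' \<and> i \<noteq> j) \<or> {x,x'} \<in> E)"
proof -
  from e obtain x1 y1 x2 y2 where eq: "e = {(x1,y1),(x2,y2)}"
    and c: "x1 \<in> V" "x2 \<in> V" "y1 \<in> {0..<n}" "y2 \<in> {0..<n}"
      "(x1 = x2 \<and> adj (complete_edges n) y1 y2) \<or> (y1 = y2 \<and> adj E x1 x2) \<or> (adj E x1 x2 \<and> adj (complete_edges n) y1 y2)"
    unfolding EH_def2 by blast
  from c(5) have c': "(x1 = x2 \<and> y1 \<noteq> y2) \<or> {x1,x2} \<in> E"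
    unfolding adj_def adj_complete by blast
  have "x1 \<noteq> x2 \<or> y1 \<noteq> y2" using c' graph_edge[OF g, of x1 x2] by blast
  then have "(x1,y1) \<noteq> (x2,y2)" by simp
  then show ?thesis using eq c c' by (intro exI[of _ x1] exI[of _ y1] exI[of _ x2] exI[of _ y2]) simp
qed

lemma graph_H:
  assumes g: "graph V E"
  shows "graph (V \<times> {0..<n}) (strong_product_edges V E {0..<n} (complete_edges n))"
proof -
  have f: "finite (V \<times> {0..<n})" using g unfolding graph_def by simp
  have "\<exists>u v. u \<noteq> v \<and> u \<in> V \<times> {0..<n} \<and> v \<in> V \<times> {0..<n} \<and> e = {u, v}"
    if e: "e \<in> strong_product_edges V E {0..<n} (complete_edges n)" for e
  proof -
    obtain x i x' j where h: "e = {(x,i),(x',j)}" "x \<in> V" "x' \<in> V" "i < n" "j < n" "(x,i) \<noteq> (x',j)"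
      using EH_elem[OF g e] by blast
    show ?thesis using h by (intro exI[of _ "(x,i)"] exI[of _ "(x',j)"]) simp
  qed
  then show ?thesis using f unfolding graph_def by blast
qed

lemma nbr_H:
  assumes g: "graph V E" and x: "x \<in> V" and i: "i < n"
  shows "nbr (V \<times> {0..<n}) (strong_product_edges V E {0..<n} (complete_edges n)) (x,i)
       = Sigma (insert x (nbr V E x)) (\<lambda>y. {0..<n}) - {(x,i)}"
proof -
  have "(x', j) \<in> nbr (V \<times> {0..<n}) (strong_product_edges V E {0..<n} (complete_edges n)) (x,i)
     \<longleftrightarrow> (x', j) \<in> Sigma (insert x (nbr V E x)) (\<lambda>y. {0..<n}) - {(x,i)}" for x' j
  proof (cases "x' \<in> V \<and> j < n")
    case True
    then show ?thesis using EH_mem[OF g x True[THEN conjunct1] i True[THEN conjunct2]] x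
      graph_edge[OF g, of x x']
      by (auto simp: nbr_def)
  next
    case False
    then show ?thesis using graph_edge[OF g, of x x'] x i by (auto simp: nbr_def)
  qed
  then show ?thesis by auto
qed


lemma reach_closed:
  assumes "reachable W F u w" "u \<in> X" "\<And>a b. a \<in> X \<Longrightarrow> b \<in> W \<Longrightarrow> {a,b} \<in> F \<Longrightarrow> b \<in> X"
  shows "w \<in> X"
proof -
  have "(\<lambda>x y. x \<in> W \<and> y \<in> W \<and> adj F x y)\<^sup>*\<^sup>* u w" using assms(1) by (simp add: reachable_def)
  then show ?thesis
  proof (induction rule: rtranclp_induct)
    case base then show ?case using assms(2) .
  next
    case (step y z) then show ?case using assms(3) by (auto simp: adj_def)
  qed
qed

lemma reach_sym:
  assumes "reachable W F u v" shows "reachable W F v u"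
proof -
  have sy: "symp (\<lambda>x y. x \<in> W \<and> y \<in> W \<and> adj F x y)"
    by (rule sympI) (auto simp: adj_def insert_commute)
  show ?thesis using assms sympD[OF symp_rtranclp[OF sy]] by (auto simp: reachable_def)
qed

lemma reach_edge:
  assumes "u \<in> W" "v \<in> W" "{u,v} \<in> F" shows "reachable W F u v"
  using assms unfolding reachable_def adj_def by auto

lemma card_fiber_compl:
  "card {j\<in>{0..<n}. (y,j) \<notin> X} = n - card {j\<in>{0..<n}. (y,j) \<in> X}"
proof -
  have e: "{j\<in>{0..<n}. (y,j) \<notin> X} = {0..<n} - {j\<in>{0..<n}. (y,j) \<in> X}" by auto
  have "card ({0..<n} - {j\<in>{0..<n}. (y,j) \<in> X}) = card {0..<n} - card {j\<in>{0..<n}. (y,j) \<in> X}"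
    by (rule card_Diff_subset) auto
  then show ?thesis by (simp only: e) simp
qed

lemma card_fiber_compl':
  "card {j. j < n \<and> (y,j) \<notin> X} = n - card {j. j < n \<and> (y,j) \<in> X}"
  using card_fiber_compl[of n y X] by simp

lemma set_bound:
  assumes g: "graph V E" and n4: "4 \<le> n"
    and deg: "\<forall>x\<in>V. \<delta> \<le> card (nbr V E x)" and d1: "1 \<le> \<delta>"
    and cut: "\<And>A. A \<subseteq> V \<Longrightarrow> A \<noteq> {} \<Longrightarrow> A \<noteq> V \<Longrightarrow>
          2 * int n * int \<delta> + 2 * int n - 4 \<le> int n * int n * (\<Sum>x\<in>A. int (card {y\<in>nbr V E x. y \<notin> A}))"
    and XW: "X \<subseteq> V \<times> {0..<n}" and X2: "2 \<le> card X" and Xc2: "2 \<le> card (V \<times> {0..<n} - X)"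
  shows "2 * int n * int \<delta> + 2 * int n - 4 \<le>
     int (card (Sigma X (\<lambda>w. nbr (V \<times> {0..<n}) (strong_product_edges V E {0..<n} (complete_edges n)) w - X)))"
proof -
  let ?W = "V \<times> {0..<n}" and ?EH = "strong_product_edges V E {0..<n} (complete_edges n)"
  have fin: "finite V" using g unfolding graph_def by simp
  define a where "a x = card {i\<in>{0..<n}. (x,i) \<in> X}" for x
  have irr: "\<forall>x\<in>V. x \<notin> nbr V E x"
  proof
    fix x assume "x \<in> V"
    have "{x,x} \<notin> E" using graph_edge[OF g, of x x] by blast
    then show "x \<notin> nbr V E x" by (simp add: nbr_def)
  qed
  have Xs: "X = Sigma V (\<lambda>x. {i\<in>{0..<n}. (x,i) \<in> X})" using XW by auto
  have cX: "card X = (\<Sum>x\<in>V. a x)"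
    by (subst Xs) (simp add: card_SigmaI fin a_def)
  have ax: "a x \<le> n" for x unfolding a_def
  proof -
    have "card {i\<in>{0..<n}. (x,i) \<in> X} \<le> card {0..<n}" by (rule card_mono) auto
    then show "card {i\<in>{0..<n}. (x,i) \<in> X} \<le> n" by simp
  qed
  have nb: "nbr ?W ?EH (x,i) - X = Sigma (insert x (nbr V E x)) (\<lambda>y. {j\<in>{0..<n}. (y,j) \<notin> X})"
    if "(x,i) \<in> X" for x i
  proof -
    have xi: "x \<in> V" "i < n" using that XW by auto
    have "Sigma (insert x (nbr V E x)) (\<lambda>y. {0..<n}) - {(x,i)} - X
       = Sigma (insert x (nbr V E x)) (\<lambda>y. {j\<in>{0..<n}. (y,j) \<notin> X})" using that by blast
    then show ?thesis by (simp only: nbr_H[OF g xi])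
  qed
  have fN: "finite (nbr V E x)" for x using fin by (simp add: nbr_def)
  have cnb: "int (card (nbr ?W ?EH (x,i) - X)) = (int n - int (a x)) + (\<Sum>y\<in>nbr V E x. int n - int (a y))"
    if xi: "(x,i) \<in> X" for x i
  proof -
    have "card (nbr ?W ?EH (x,i) - X) = (\<Sum>y\<in>insert x (nbr V E x). card {j\<in>{0..<n}. (y,j) \<notin> X})"
      by (simp add: nb[OF xi] card_SigmaI fN)
    also have "\<dots> = (\<Sum>y\<in>insert x (nbr V E x). n - a y)"
      by (simp add: card_fiber_compl' a_def)
    finally have "int (card (nbr ?W ?EH (x,i) - X)) = (\<Sum>y\<in>insert x (nbr V E x). int n - int (a y))"
      using ax by (simp add: of_nat_diff)
    also have "\<dots> = (int n - int (a x)) + (\<Sum>y\<in>nbr V E x. int n - int (a y))"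
      using irr xi XW fN by (subst sum.insert) auto
    finally show ?thesis .
  qed
  have finX: "finite X" using XW fin finite_subset by blast
  have finN: "finite (nbr ?W ?EH w - X)" for w
  proof -
    have "nbr ?W ?EH w \<subseteq> ?W" by (auto simp: nbr_def)
    then show ?thesis using fin finite_subset by blast
  qed
  have "int (card (Sigma X (\<lambda>w. nbr ?W ?EH w - X))) = (\<Sum>w\<in>X. int (card (nbr ?W ?EH w - X)))"
    by (simp add: card_SigmaI finX finN)
  also have "\<dots> = (\<Sum>x\<in>V. \<Sum>i\<in>{i\<in>{0..<n}. (x,i) \<in> X}. int (card (nbr ?W ?EH (x,i) - X)))"
    by (subst Xs, subst sum.Sigma) (auto simp: fin)
  also have "\<dots> = (\<Sum>x\<in>V. \<Sum>i\<in>{i\<in>{0..<n}. (x,i) \<in> X}. (int n - int (a x)) + (\<Sum>y\<in>nbr V E x. int n - int (a y)))"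
    by (intro sum.cong refl) (simp add: cnb)
  also have "\<dots> = cost V E n (\<lambda>x. int (a x))"
    unfolding cost_def by (intro sum.cong refl) (simp add: a_def distrib_left sum_distrib_left)
  finally have eq: "int (card (Sigma X (\<lambda>w. nbr ?W ?EH w - X))) = cost V E n (\<lambda>x. int (a x))" .
  have cW: "card ?W = card V * n" by (simp add: card_cartesian_product)
  have cWX: "card (?W - X) = card V * n - card X" using XW finX by (simp add: card_Diff_subset cW)
  have n2: "2 \<le> n" using n4 by simp
  have r: "\<forall>x\<in>V. 0 \<le> int (a x) \<and> int (a x) \<le> int n" using ax by simp
  have s1: "2 \<le> (\<Sum>x\<in>V. int (a x))" using X2 cX by (simp flip: of_nat_sum)
  have s2: "(\<Sum>x\<in>V. int (a x)) + 2 \<le> int n * int (card V)"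
  proof -
    have "card X + 2 \<le> card V * n" using Xc2 cWX by linarith
    then have "sum a V + 2 \<le> n * card V" using cX by (simp add: mult.commute)
    then have "int (sum a V + 2) \<le> int (n * card V)" by (simp only: of_nat_le_iff)
    then show ?thesis by simp
  qed
  have "2 * int n * int \<delta> + 2 * int n - 4 \<le> cost V E n (\<lambda>x. int (a x))"
    by (rule cost_bound[OF fin deg d1 irr n2 refl cut r s1 s2])
  then show ?thesis using eq by simp
qed


lemma reach_trans:
  assumes "reachable W F u v" "reachable W F v w" shows "reachable W F u w"
  using assms unfolding reachable_def by (meson rtranclp_trans)

lemma cut_from_lambda:
  assumes g: "graph V E"
    and lam: "2 * n * \<delta> + 2 * n - 4 \<le> n^2 * edge_connectivity V E"
    and A: "A \<subseteq> V" "A \<noteq> {}" "A \<noteq> V" and n4: "4 \<le> n"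
  shows "2 * int n * int \<delta> + 2 * int n - 4 \<le> int n * int n * (\<Sum>x\<in>A. int (card {y\<in>nbr V E x. y \<notin> A}))"
proof -
  have fin: "finite V" using g unfolding graph_def by simp
  have finE: "finite E" by (rule graph_finE[OF g])
  define D where "D = {e\<in>E. \<exists>x\<in>A. \<exists>y\<in>V-A. e = {x,y}}"
  have DE: "D \<subseteq> E" by (auto simp: D_def)
  have cutD: "edge_cut V E D"
    unfolding edge_cut_def
  proof
    show "D \<subseteq> E" by (rule DE)
    obtain x where x: "x \<in> A" using A by auto
    obtain y where y: "y \<in> V" "y \<notin> A" using A by auto
    have "\<not> reachable V (E - D) x y"
    proof
      assume r: "reachable V (E - D) x y"
      have "y \<in> A"
      proof (rule reach_closed[OF r x])
        fix a b assume "a \<in> A" "b \<in> V" "{a,b} \<in> E - D"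
        then show "b \<in> A" by (auto simp: D_def)
      qed
      with y show False by simp
    qed
    then show "\<not> connected_graph V (E - D)" using x y A unfolding connected_graph_def by blast
  qed
  have finC: "finite {card S |S. edge_cut V E S}"
  proof -
    have "{card S |S. edge_cut V E S} \<subseteq> card ` Pow E" by (auto simp: edge_cut_def)
    then show ?thesis using finE finite_subset by blast
  qed
  have lD: "edge_connectivity V E \<le> card D"
    unfolding edge_connectivity_def by (rule Min_le[OF finC]) (use cutD in blast)
  have fA: "finite A" using A fin finite_subset by blast
  have "D \<subseteq> (\<Union>x\<in>A. (\<lambda>y. {x,y}) ` {y\<in>nbr V E x. y \<notin> A})"
    by (auto simp: D_def nbr_def)
  then have "card D \<le> card (\<Union>x\<in>A. (\<lambda>y. {x,y}) ` {y\<in>nbr V E x. y \<notin> A})"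
    by (rule card_mono[rotated]) (use fA fin in \<open>auto simp: nbr_def\<close>)
  also have "\<dots> \<le> (\<Sum>x\<in>A. card ((\<lambda>y. {x,y}) ` {y\<in>nbr V E x. y \<notin> A}))"
    by (rule card_UN_le[OF fA])
  also have "\<dots> \<le> (\<Sum>x\<in>A. card {y\<in>nbr V E x. y \<notin> A})"
    by (rule sum_mono) (rule card_image_le, use fin in \<open>simp add: nbr_def\<close>)
  finally have cD: "card D \<le> (\<Sum>x\<in>A. card {y\<in>nbr V E x. y \<notin> A})" .
  have "2 * n * \<delta> + 2 * n - 4 \<le> n * n * (\<Sum>x\<in>A. card {y\<in>nbr V E x. y \<notin> A})"
  proof -
    have "n^2 * edge_connectivity V E \<le> n^2 * (\<Sum>x\<in>A. card {y\<in>nbr V E x. y \<notin> A})"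
      using lD cD by (intro mult_left_mono) auto
    then show ?thesis using lam unfolding power2_eq_square by linarith
  qed
  then have "int (2 * n * \<delta> + 2 * n - 4) \<le> int (n * n * (\<Sum>x\<in>A. card {y\<in>nbr V E x. y \<notin> A}))"
    by (simp only: of_nat_le_iff)
  moreover have "int (2 * n * \<delta> + 2 * n - 4) = 2 * int n * int \<delta> + 2 * int n - 4" using n4 by (simp add: of_nat_diff)
  ultimately show ?thesis by simp
qed


lemma lower_bound:
  assumes g: "graph V E" and n4: "4 \<le> n"
    and deg: "\<forall>x\<in>V. \<delta> \<le> card (nbr V E x)" and d1: "1 \<le> \<delta>"
    and cut: "\<And>A. A \<subseteq> V \<Longrightarrow> A \<noteq> {} \<Longrightarrow> A \<noteq> V \<Longrightarrow>
          2 * int n * int \<delta> + 2 * int n - 4 \<le> int n * int n * (\<Sum>x\<in>A. int (card {y\<in>nbr V E x. y \<notin> A}))"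
    and Vne: "V \<noteq> {}"
    and rc: "restricted_edge_cut (V \<times> {0..<n}) (strong_product_edges V E {0..<n} (complete_edges n)) S"
  shows "2 * int n * int \<delta> + 2 * int n - 4 \<le> int (card S)"
proof -
  let ?W = "V \<times> {0..<n}" and ?EH = "strong_product_edges V E {0..<n} (complete_edges n)"
  have fin: "finite V" using g unfolding graph_def by simp
  have finW: "finite ?W" using fin by simp
  have SE: "S \<subseteq> ?EH" and nc: "\<not> connected_graph ?W (?EH - S)"
    using rc unfolding restricted_edge_cut_def by auto
  have comp2a: "\<forall>v\<in>?W. 2 \<le> card (component ?W (?EH - S) v)"
    using rc unfolding restricted_edge_cut_def by (rule conjunct2[THEN conjunct2])
  have comp2: "\<And>v. v \<in> ?W \<Longrightarrow> 2 \<le> card (component ?W (?EH - S) v)"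
    using comp2a by (rule bspec)
  have finS: "finite S" using SE graph_finE[OF graph_H[OF g]] finite_subset by blast
  have Wne: "?W \<noteq> {}" using Vne n4 by auto
  have "\<not> (?W \<noteq> {} \<and> (\<forall>u\<in>?W. \<forall>v\<in>?W. reachable ?W (?EH - S) u v))"
    using nc unfolding connected_graph_def .
  then have "\<not> (\<forall>u\<in>?W. \<forall>v\<in>?W. reachable ?W (?EH - S) u v)" using Wne by (simp only: simp_thms)
  then obtain u v where uv: "u \<in> ?W" "v \<in> ?W" "\<not> reachable ?W (?EH - S) u v"
    by (meson)
  define X where "X = component ?W (?EH - S) u"
  have XW: "X \<subseteq> ?W"
  proof
    fix w assume "w \<in> X"
    then have "reachable ?W (?EH - S) u w" by (simp add: X_def component_def)
    then show "w \<in> ?W" unfolding reachable_def by (rule conjunct2[THEN conjunct1])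
  qed
  have X2: "2 \<le> card X" unfolding X_def by (rule comp2[OF uv(1)])
  have cv: "component ?W (?EH - S) v \<subseteq> ?W - X"
  proof
    fix w assume w: "w \<in> component ?W (?EH - S) v"
    then have rw: "reachable ?W (?EH - S) v w" by (simp add: component_def)
    then have "w \<in> ?W" unfolding reachable_def by (rule conjunct2[THEN conjunct1])
    moreover have "w \<notin> X"
    proof
      assume "w \<in> X"
      then have "reachable ?W (?EH - S) u w" by (simp add: X_def component_def)
      then have "reachable ?W (?EH - S) u v" using reach_trans reach_sym[OF rw] by metis
      with uv(3) show False by simp
    qed
    ultimately show "w \<in> ?W - X" by simp
  qed
  have Xc2: "2 \<le> card (?W - X)"
  proof -
    have "card (component ?W (?EH - S) v) \<le> card (?W - X)"
      by (rule card_mono[OF _ cv]) (use finW in simp)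
    then show ?thesis using comp2[OF uv(2)] by linarith
  qed
  let ?P = "Sigma X (\<lambda>w. nbr ?W ?EH w - X)"
  have img: "(\<lambda>(w,w'). {w,w'}) ` ?P \<subseteq> S"
  proof
    fix e assume "e \<in> (\<lambda>(w,w'). {w,w'}) ` ?P"
    then obtain w w' where ww: "w \<in> X" "w' \<in> nbr ?W ?EH w" "w' \<notin> X" "e = {w,w'}" by auto
    have wW: "w' \<in> ?W" "{w,w'} \<in> ?EH" using ww by (auto simp: nbr_def)
    show "e \<in> S"
    proof (rule ccontr)
      assume "e \<notin> S"
      then have "{w,w'} \<in> ?EH - S" using wW ww by simp
      then have "reachable ?W (?EH - S) w w'" using XW ww(1) wW by (intro reach_edge) auto
      moreover have "reachable ?W (?EH - S) u w" using ww(1) by (simp add: X_def component_def)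
      ultimately have "reachable ?W (?EH - S) u w'" by (rule reach_trans[rotated])
      then show False using ww(3) by (simp add: X_def component_def)
    qed
  qed
  have inj: "inj_on (\<lambda>(w,w'). {w,w'}) ?P"
  proof (rule inj_onI)
    fix p q assume p: "p \<in> ?P" and q: "q \<in> ?P" and eq: "(\<lambda>(w,w'). {w,w'}) p = (\<lambda>(w,w'). {w,w'}) q"
    obtain w w' where pw: "p = (w,w')" "w \<in> X" "w' \<notin> X" using p by auto
    obtain z z' where qz: "q = (z,z')" "z \<in> X" "z' \<notin> X" using q by auto
    from eq pw qz have "{w,w'} = {z,z'}" by simp
    then have "(w = z \<and> w' = z') \<or> (w = z' \<and> w' = z)" by (simp add: doubleton_eq_iff)
    then show "p = q" using pw qz by auto
  qed
  have "card ?P = card ((\<lambda>(w,w'). {w,w'}) ` ?P)" using inj by (simp add: card_image)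
  also have "\<dots> \<le> card S" by (rule card_mono[OF finS img])
  finally have "card ?P \<le> card S" .
  moreover have "2 * int n * int \<delta> + 2 * int n - 4 \<le> int (card ?P)"
    by (rule set_bound[OF g n4 deg d1 cut XW X2 Xc2])
  ultimately show ?thesis by linarith
qed


lemma degree_H:
  assumes g: "graph V E" and x: "x \<in> V" and i: "i < n"
  shows "degree (strong_product_edges V E {0..<n} (complete_edges n)) (x,i) = (card (nbr V E x) + 1) * n - 1"
proof -
  have fin: "finite V" using g unfolding graph_def by simp
  have fN: "finite (nbr V E x)" using fin by (simp add: nbr_def)
  have xN: "x \<notin> nbr V E x" using graph_edge[OF g, of x x] by (auto simp: nbr_def)
  have "degree (strong_product_edges V E {0..<n} (complete_edges n)) (x,i)
      = card (Sigma (insert x (nbr V E x)) (\<lambda>y. {0..<n}) - {(x,i)})"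
    using degree_nbr[OF graph_H[OF g], of "(x,i)"] x i nbr_H[OF g x i] by simp
  also have "\<dots> = card (Sigma (insert x (nbr V E x)) (\<lambda>y. {0..<n})) - 1"
    using x i by (subst card_Diff_singleton) auto
  also have "\<dots> = (card (nbr V E x) + 1) * n - 1"
    using fN xN by (simp add: card_cartesian_product)
  finally show ?thesis .
qed


theorem corollary3p8:
  fixes V :: "'a set" and E :: "'a set set" and n :: nat
  assumes "graph V E"
    and "connected_graph V E"
    and "card V \<ge> 2"
    and "n \<ge> 4"
    and "min (n^2 * edge_connectivity V E) ((n - 1) * (card V + 2 * card E))
           \<ge> 2 * n * min_degree V E + 2 * n - 4"
  shows "max_restricted_edge_connected (V \<times> {0..<n})
           (strong_product_edges V E {0..<n} (complete_edges n))"
proof -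
  note g = assms(1) and conn = assms(2) and n4 = assms(4)
  let ?W = "V \<times> {0..<n}" and ?EH = "strong_product_edges V E {0..<n} (complete_edges n)"
  define \<delta> where "\<delta> = min_degree V E"
  define \<xi> where "\<xi> = 2 * n * \<delta> + 2 * n - 4"
  have fin: "finite V" using g unfolding graph_def by simp
  have Vne: "V \<noteq> {}" using assms(3) by auto
  have gH: "graph ?W ?EH" by (rule graph_H[OF g])
  have finW: "finite ?W" using fin by simp
  have finEH: "finite ?EH" by (rule graph_finE[OF gH])
  have deg: "\<forall>x\<in>V. \<delta> \<le> card (nbr V E x)"
  proof
    fix x assume x: "x \<in> V"
    have "\<delta> \<le> degree E x" unfolding \<delta>_def min_degree_def by (rule Min_le) (use fin x in auto)
    then show "\<delta> \<le> card (nbr V E x)" using degree_nbr[OF g x] by simp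
  qed
  obtain x0 where x0: "x0 \<in> V" "degree E x0 = \<delta>"
  proof -
    have "Min (degree E ` V) \<in> degree E ` V" by (rule Min_in) (use fin Vne in auto)
    then show ?thesis using that unfolding \<delta>_def min_degree_def by auto
  qed
  have cx0: "card (nbr V E x0) = \<delta>" using x0 degree_nbr[OF g x0(1)] by simp
  have d1: "1 \<le> \<delta>"
  proof -
    obtain y where y: "y \<in> V" "y \<noteq> x0"
    proof -
      have "\<not> V \<subseteq> {x0}"
      proof
        assume "V \<subseteq> {x0}"
        then have "card V \<le> card {x0}" by (rule card_mono[rotated]) simp
        then show False using assms(3) by simp
      qed
      then show ?thesis using that by blast
    qed
    have "reachable V E x0 y" using conn x0(1) y(1) unfolding connected_graph_def by blast
    then have r: "(\<lambda>a b. a \<in> V \<and> b \<in> V \<and> adj E a b)\<^sup>*\<^sup>* x0 y" by (simp add: reachable_def)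
    have "\<exists>z. z \<in> V \<and> adj E x0 z"
      using r y(2) by (cases rule: converse_rtranclpE) auto
    then obtain z where "z \<in> V" "{x0,z} \<in> E" by (auto simp: adj_def)
    then have "z \<in> nbr V E x0" by (simp add: nbr_def)
    then have "card (nbr V E x0) \<noteq> 0" using fin by (auto simp: nbr_def)
    then show ?thesis using cx0 by simp
  qed
  have lam: "2 * n * \<delta> + 2 * n - 4 \<le> n^2 * edge_connectivity V E"
    using assms(5) unfolding \<delta>_def by simp
  have cutH: "\<And>A. A \<subseteq> V \<Longrightarrow> A \<noteq> {} \<Longrightarrow> A \<noteq> V \<Longrightarrow>
          2 * int n * int \<delta> + 2 * int n - 4 \<le> int n * int n * (\<Sum>x\<in>A. int (card {y\<in>nbr V E x. y \<notin> A}))"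
    by (rule cut_from_lambda[OF g lam _ _ _ n4])
  have xi_int: "int \<xi> = 2 * int n * int \<delta> + 2 * int n - 4" using n4 unfolding \<xi>_def by (simp add: of_nat_diff)
  have LB: "\<xi> \<le> card S" if "restricted_edge_cut ?W ?EH S" for S
  proof -
    have "2 * int n * int \<delta> + 2 * int n - 4 \<le> int (card S)"
      by (rule lower_bound[OF g n4 deg d1 cutH Vne that])
    then show ?thesis using xi_int by linarith
  qed
  have dH: "degree ?EH (x,i) = (card (nbr V E x) + 1) * n - 1" if "x \<in> V" "i < n" for x i
    using degree_H[OF g that] .
  have dHge: "(\<delta> + 1) * n - 1 \<le> degree ?EH w" if "w \<in> ?W" for w
  proof -
    obtain x i where w0: "w = (x,i)" by (cases w)
    have w: "w = (x,i)" "x \<in> V" "i < n" using w0 that by auto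
    have "(\<delta> + 1) * n \<le> (card (nbr V E x) + 1) * n" using deg w(2) by simp
    then have "(\<delta> + 1) * n - 1 \<le> (card (nbr V E x) + 1) * n - 1" by (rule diff_le_mono)
    then show ?thesis using dH[OF w(2,3)] w(1) by simp
  qed
  define u where "u = (x0, 0::nat)"
  define v where "v = (x0, 1::nat)"
  have uW: "u \<in> ?W" and vW: "v \<in> ?W" using x0 n4 by (auto simp: u_def v_def)
  have uv_ne: "u \<noteq> v" by (simp add: u_def v_def)
  have uvE: "{u,v} \<in> ?EH" unfolding u_def v_def using EH_mem[OF g x0(1) x0(1), of 0 n 1] n4 by simp
  have du: "degree ?EH u = (\<delta> + 1) * n - 1" using dH[OF x0(1), of 0] n4 cx0 by (simp add: u_def)
  have dv: "degree ?EH v = (\<delta> + 1) * n - 1" using dH[OF x0(1), of 1] n4 cx0 by (simp add: v_def)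
  have xi_eq: "degree ?EH u + degree ?EH v - 2 = \<xi>"
    using du dv n4 unfolding \<xi>_def by (simp add: algebra_simps)
  have edge_in: "a \<in> ?W \<and> b \<in> ?W" if "{a,b} \<in> ?EH" for a b
    using graph_edge[OF gH that] by simp
  have MED: "min_edge_degree ?EH = \<xi>"
    unfolding min_edge_degree_def
  proof (rule Min_eqI)
    have "{degree ?EH a + degree ?EH b - 2 |a b. {a, b} \<in> ?EH \<and> a \<noteq> b}
        \<subseteq> (\<lambda>(a,b). degree ?EH a + degree ?EH b - 2) ` (?W \<times> ?W)"
    proof
      fix t assume "t \<in> {degree ?EH a + degree ?EH b - 2 |a b. {a, b} \<in> ?EH \<and> a \<noteq> b}"
      then obtain a b where ab: "t = degree ?EH a + degree ?EH b - 2" "{a,b} \<in> ?EH" by blast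
      then have "(a,b) \<in> ?W \<times> ?W" using edge_in[OF ab(2)] by simp
      then show "t \<in> (\<lambda>(a,b). degree ?EH a + degree ?EH b - 2) ` (?W \<times> ?W)"
        using ab(1) by (intro image_eqI[of _ _ "(a,b)"]) auto
    qed
    then show "finite {degree ?EH a + degree ?EH b - 2 |a b. {a, b} \<in> ?EH \<and> a \<noteq> b}"
      by (rule finite_subset) (use finW in simp)
  next
    fix t assume "t \<in> {degree ?EH a + degree ?EH b - 2 |a b. {a, b} \<in> ?EH \<and> a \<noteq> b}"
    then obtain a b where ab: "t = degree ?EH a + degree ?EH b - 2" "{a,b} \<in> ?EH" by blast
    have "(\<delta> + 1) * n - 1 \<le> degree ?EH a" "(\<delta> + 1) * n - 1 \<le> degree ?EH b"
      using dHge edge_in[OF ab(2)] by auto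
    then show "\<xi> \<le> t" using ab(1) n4 unfolding \<xi>_def by (simp add: algebra_simps)
  next
    show "\<xi> \<in> {degree ?EH a + degree ?EH b - 2 |a b. {a, b} \<in> ?EH \<and> a \<noteq> b}"
      using xi_eq uvE uv_ne by blast
  qed
  define S0 where "S0 = {e\<in>?EH. (u \<in> e \<or> v \<in> e) \<and> e \<noteq> {u,v}}"
  have S0E: "S0 \<subseteq> ?EH" unfolding S0_def by (rule Collect_restrict)
  have Iint: "{e\<in>?EH. u \<in> e} \<inter> {e\<in>?EH. v \<in> e} = {{u,v}}"
  proof
    show "{{u,v}} \<subseteq> {e\<in>?EH. u \<in> e} \<inter> {e\<in>?EH. v \<in> e}" using uvE by simp
    show "{e\<in>?EH. u \<in> e} \<inter> {e\<in>?EH. v \<in> e} \<subseteq> {{u,v}}"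
    proof
      fix e assume e: "e \<in> {e\<in>?EH. u \<in> e} \<inter> {e\<in>?EH. v \<in> e}"
      then have eE: "e \<in> ?EH" and ue: "u \<in> e" and ve: "v \<in> e" by simp_all
      obtain p q where pq: "p \<noteq> q" "e = {p,q}" using graph_elem[OF gH eE] by metis
      have "e = {u,v}" using pq ue ve uv_ne by (simp only: insert_iff empty_iff) blast
      then show "e \<in> {{u,v}}" by simp
    qed
  qed
  have cS0: "card S0 = \<xi>"
  proof -
    have fu: "finite {e\<in>?EH. u \<in> e}" and fv: "finite {e\<in>?EH. v \<in> e}" using finEH by auto
    have S0eq: "S0 = ({e\<in>?EH. u \<in> e} \<union> {e\<in>?EH. v \<in> e}) - {{u,v}}" by (auto simp: S0_def)
    have un: "card ({e\<in>?EH. u \<in> e} \<union> {e\<in>?EH. v \<in> e}) + 1 = degree ?EH u + degree ?EH v"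
      using card_Un_Int[OF fu fv] Iint unfolding degree_def by simp
    have "card S0 = card ({e\<in>?EH. u \<in> e} \<union> {e\<in>?EH. v \<in> e}) - 1"
      unfolding S0eq using uvE by (subst card_Diff_singleton) (use fu fv in auto)
    then show ?thesis using un xi_eq by simp
  qed
  have closed: "b \<in> {u,v}" if "a \<in> {u,v}" "b \<in> ?W" "{a,b} \<in> ?EH - S0" for a b
  proof -
    have "{a,b} = {u,v}" using that by (auto simp: S0_def)
    then show ?thesis by (auto simp: doubleton_eq_iff)
  qed
  have rcS0: "restricted_edge_cut ?W ?EH S0"
    unfolding restricted_edge_cut_def
  proof (intro conjI)
    show "S0 \<subseteq> ?EH" by (rule S0E)
    define w2 where "w2 = (x0, 2::nat)"
    have w2W: "w2 \<in> ?W" using x0 n4 by (simp add: w2_def)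
    have "\<not> reachable ?W (?EH - S0) u w2"
    proof
      assume r: "reachable ?W (?EH - S0) u w2"
      have "w2 \<in> {u,v}" by (rule reach_closed[OF r _ closed]) simp_all
      then show False by (simp add: w2_def u_def v_def)
    qed
    then show "\<not> connected_graph ?W (?EH - S0)" using uW w2W unfolding connected_graph_def by blast
    show "\<forall>w\<in>?W. 2 \<le> card (component ?W (?EH - S0) w)"
    proof
      fix w assume wW: "w \<in> ?W"
      obtain w' where w': "w' \<in> ?W" "w' \<noteq> w" "{w,w'} \<in> ?EH - S0"
      proof (cases "w \<in> {u,v}")
        case True
        then show ?thesis
        proof
          assume "w = u"
          then show ?thesis using that[of v] vW uv_ne uvE by (auto simp: S0_def)
        next
          assume "w \<in> {v}"
          then have "w = v" by simp
          then show ?thesis using that[of u] uW uv_ne uvE by (auto simp: S0_def insert_commute)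
        qed
      next
        case False
        obtain x i where xi0: "w = (x,i)" by (cases w)
        have xi: "w = (x,i)" "x \<in> V" "i < n" using xi0 wW by auto
        define j where "j = (if x = x0 then (if i = 2 then 3 else 2) else (if i = 0 then 1 else 0::nat))"
        have j: "j < n" "j \<noteq> i" using n4 unfolding j_def by auto
        have notuv: "(x,j) \<noteq> u" "(x,j) \<noteq> v" unfolding j_def u_def v_def by auto
        have notuv': "w \<noteq> u" "w \<noteq> v" using False by auto
        have inEH: "{w, (x,j)} \<in> ?EH" unfolding xi(1) using EH_mem[OF g xi(2) xi(2) xi(3) j(1)] j(2) by simp
        have "{w, (x,j)} \<notin> S0" using notuv notuv' unfolding S0_def by auto
        then show ?thesis using that[of "(x,j)"] inEH xi j by auto
      qed
      have "{w,w'} \<subseteq> component ?W (?EH - S0) w"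
        using reach_edge[OF wW w'(1) w'(3)] wW
        by (auto simp: component_def reachable_def)
      moreover have "finite (component ?W (?EH - S0) w)"
        by (rule finite_subset[OF _ finW]) (auto simp: component_def reachable_def)
      ultimately have "card {w,w'} \<le> card (component ?W (?EH - S0) w)" by (rule card_mono[rotated])
      then show "2 \<le> card (component ?W (?EH - S0) w)" using w'(2) by simp
    qed
  qed
  have REC: "restricted_edge_connectivity ?W ?EH = \<xi>"
    unfolding restricted_edge_connectivity_def
  proof (rule Min_eqI)
    have "{card S |S. restricted_edge_cut ?W ?EH S} \<subseteq> card ` Pow ?EH"
      by (auto simp: restricted_edge_cut_def)
    then show "finite {card S |S. restricted_edge_cut ?W ?EH S}"
      by (rule finite_subset) (use finEH in simp)
  next
    fix t assume "t \<in> {card S |S. restricted_edge_cut ?W ?EH S}"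
    then show "\<xi> \<le> t" using LB by blast
  next
    show "\<xi> \<in> {card S |S. restricted_edge_cut ?W ?EH S}" using rcS0 cS0 by blast
  qed
  have ex: "\<exists>S. restricted_edge_cut ?W ?EH S" using rcS0 by (rule exI)
  show ?thesis unfolding max_restricted_edge_connected_def using ex REC MED by (intro conjI) simp_all
qed

end
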